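(* Let $(\mathbb R/2\pi\mathbb Z)^3_{\rm reg}=\{(\alpha,\beta,\gamma)\in(\mathbb R/2\pi\mathbb Z)^3:\sin2\beta\neq0\}$. The map $$\Phi:(\mathbb R/2\pi\mathbb Z)^3_{\rm reg}\to\{a\in\mathcal A_2:|a|=1\}\setminus(\mathcal A_1e_2\cup\mathcal A_1),\qquad(\alpha,\beta,\gamma)\mapsto\exp(\alpha e_1)\exp(\beta e_1e_2)\exp(\gamma e_1)$$ is an eight-fold covering map.
   Context: $\mathcal A_2$ is the real associative algebra generated by $e_1,e_2$ with $e_1^2=e_2^2=-1$, $e_1e_2=-e_2e_1$, with Euclidean norm in the basis $1,e_1,e_2,e_1e_2$; $\exp x=\sum_{m\ge0}x^m/m!$. $\mathcal A_1=\mathbb R+\mathbb Re_1$, so $\mathcal A_1e_2=\mathbb Re_2+\mathbb Re_1e_2$. *)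

theory Defs
  imports "HOL-Analysis.Analysis"
begin

text \<open>The algebra A_2 modelled on real^4 with coordinates w.r.t. the basis
  1, e1, e2, e1e2 (indices 1,2,3,4); the norm of real^4 is the Euclidean norm
  in this basis.  The multiplication is the bilinear extension of the rules
  e1^2 = e2^2 = -1, e1 e2 = - e2 e1 (hence (e1e2)^2 = -1, etc.).\<close>

type_synonym A2 = "real^4"

definition A2_one :: A2 where "A2_one = vector [1, 0, 0, 0]"
definition A2_e1 :: A2 where "A2_e1 = vector [0, 1, 0, 0]"
definition A2_e2 :: A2 where "A2_e2 = vector [0, 0, 1, 0]"
definition A2_e12 :: A2 where "A2_e12 = vector [0, 0, 0, 1]"

definition A2_mult :: "A2 \<Rightarrow> A2 \<Rightarrow> A2" where
  "A2_mult x y = vector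
     [ x$1 * y$1 - x$2 * y$2 - x$3 * y$3 - x$4 * y$4,
       x$1 * y$2 + x$2 * y$1 + x$3 * y$4 - x$4 * y$3,
       x$1 * y$3 - x$2 * y$4 + x$3 * y$1 + x$4 * y$2,
       x$1 * y$4 + x$2 * y$3 - x$3 * y$2 + x$4 * y$1 ]"

fun A2_pow :: "A2 \<Rightarrow> nat \<Rightarrow> A2" where
  "A2_pow x 0 = A2_one"
| "A2_pow x (Suc m) = A2_mult x (A2_pow x m)"

definition A2_exp :: "A2 \<Rightarrow> A2" where
  "A2_exp x = (\<Sum>m. (1 / fact m) *\<^sub>R A2_pow x m)"

definition A1 :: "A2 set" where
  "A1 = {s *\<^sub>R A2_one + t *\<^sub>R A2_e1 | s t. True}"

definition A1e2 :: "A2 set" where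
  "A1e2 = {A2_mult a A2_e2 | a. a \<in> A1}"

text \<open>R/2piZ is represented by the unit circle in C via theta -> e^(i theta);
  the inverse (mod 2 pi) is Arg.\<close>
definition circle :: "complex set" where
  "circle = sphere 0 1"

definition torus_reg :: "(complex \<times> complex \<times> complex) set" where
  "torus_reg = {(u, v, w). u \<in> circle \<and> v \<in> circle \<and> w \<in> circle \<and> sin (2 * Arg v) \<noteq> 0}"

definition Phi :: "complex \<times> complex \<times> complex \<Rightarrow> A2" where
  "Phi = (\<lambda>(u, v, w). A2_mult (A2_mult (A2_exp (Arg u *\<^sub>R A2_e1))
                                          (A2_exp (Arg v *\<^sub>R A2_e12)))
                                 (A2_exp (Arg w *\<^sub>R A2_e1)))"

definition target :: "A2 set" where
  "target = {a. norm a = 1} - (A1e2 \<union> A1)"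

end

theory Submission
  imports Defs "HOL-Analysis.Analysis"
begin


definition sec :: "complex \<Rightarrow> complex \<Rightarrow> real \<Rightarrow> complex \<Rightarrow> complex \<Rightarrow> complex \<Rightarrow> complex \<times> complex \<times> complex" where
 "sec \<zeta>0 \<rho>0 \<epsilon> \<eta> p q = (let w = \<eta> * \<rho>0 * csqrt (p*q / of_real (cmod (p*q)) * cnj \<zeta>0) in
   (of_real \<epsilon> * (p / of_real (cmod p)) * cnj w, of_real (\<epsilon> * cmod p) + \<i> * of_real (\<epsilon> * Re (\<eta>^2) * cmod q), w))"

lemma eta_facts: "\<eta> \<in> {1,-1,\<i>,-\<i>} \<Longrightarrow> \<eta>^2 = of_real (Re (\<eta>^2)) \<and> (Re(\<eta>^2) = 1 \<or> Re(\<eta>^2) = -1) \<and> cmod \<eta> = 1"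
  by (auto simp: power2_eq_square)

lemma unit_sq: "cmod (r::complex) = 1 \<Longrightarrow> cnj r * r = 1"
  using complex_norm_square[of r] by (simp add: mult.commute)

lemma sec_ok:
  assumes z0: "cmod \<zeta>0 = 1" and r0: "\<rho>0^2 = \<zeta>0"
    and p: "p \<noteq> 0" and q: "q \<noteq> 0" and pq: "cmod p ^ 2 + cmod q ^ 2 = 1"
    and O: "Re (p * q * cnj \<zeta>0) > 0"
    and eps: "\<epsilon> = 1 \<or> \<epsilon> = -1" and eta: "\<eta> \<in> {1,-1,\<i>,-\<i>}"
    and s: "sec \<zeta>0 \<rho>0 \<epsilon> \<eta> p q = (u,v,w)"
  shows "cmod u = 1" "cmod v = 1" "cmod w = 1" "Re v * Im v \<noteq> 0" "\<epsilon> * Re v > 0"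
        "Re (w / (\<eta>*\<rho>0)) > \<bar>Im (w / (\<eta>*\<rho>0))\<bar>"
        "of_real (Re v) * (u * w) = p" "of_real (Im v) * (cnj u * w) = q"
proof -
  define e where "e = Re (\<eta>^2)"
  have he: "\<eta>^2 = of_real e" "e = 1 \<or> e = -1" "cmod \<eta> = 1" using eta_facts[OF eta] by (auto simp: e_def)
  have "cmod \<rho>0 ^ 2 = 1" using r0 z0 by (simp flip: norm_power)
  then have cr0: "cmod \<rho>0 = 1" by (simp add: power2_eq_1_iff) (use norm_ge_zero[of \<rho>0] in linarith)
  define a where "a = p*q / of_real (cmod (p*q)) * cnj \<zeta>0"
  define r where "r = csqrt a"
  have w: "w = \<eta> * \<rho>0 * r" and v: "v = of_real (\<epsilon> * cmod p) + \<i> * of_real (\<epsilon> * e * cmod q)"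
    and u: "u = of_real \<epsilon> * (p / of_real (cmod p)) * cnj w"
    using s by (auto simp: sec_def Let_def a_def r_def e_def)
  have ca: "cmod a = 1" using p q z0 by (simp add: a_def norm_mult norm_divide)
  have Rea: "Re a > 0" using O p q by (simp add: a_def norm_mult mult.assoc)
  have r2: "r^2 = a" by (simp add: r_def)
  have "cmod r ^ 2 = 1" using ca r2 by (simp flip: norm_power)
  then have cr: "cmod r = 1" by (simp add: power2_eq_1_iff) (use norm_ge_zero[of r] in linarith)
  show cw: "cmod w = 1" by (simp add: w norm_mult he cr0 cr)
  have ae: "\<bar>\<epsilon>\<bar> = 1" using eps by auto
  show "cmod u = 1" using p by (simp add: u norm_mult norm_divide cw ae)
  have e2: "e*e = 1" "\<epsilon>*\<epsilon> = 1" using he eps by auto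
  have e2': "e^2 = 1" "\<epsilon>^2 = 1" using e2 by (simp_all add: power2_eq_square)
  have "cmod v ^ 2 = 1" using pq by (simp add: v cmod_power2 power_mult_distrib e2')
  then show "cmod v = 1" by (simp add: power2_eq_1_iff) (use norm_ge_zero[of v] in linarith)
  show "Re v * Im v \<noteq> 0" using p q he eps by (auto simp: v)
  show "\<epsilon> * Re v > 0" using p by (simp add: v mult.assoc[symmetric] e2)
  have "w / (\<eta>*\<rho>0) = r" using he cr0 by (auto simp: w)
  moreover have "Re r > \<bar>Im r\<bar>"
  proof -
    have "Re (r^2) > 0" using r2 Rea by simp
    then have "\<bar>Im r\<bar>^2 < Re r ^2" by (simp add: power2_eq_square)
    moreover have "0 \<le> Re r" unfolding r_def by (rule Re_csqrt)
    ultimately show ?thesis by (rule power2_less_imp_less)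
  qed
  ultimately show "Re (w / (\<eta>*\<rho>0)) > \<bar>Im (w / (\<eta>*\<rho>0))\<bar>" by simp
  have cww: "cnj w * w = 1" using unit_sq[OF cw] .
  have cp: "cnj p * p = of_real (cmod p ^2)" using complex_norm_square[of p] by (simp add: mult.commute)
  show "of_real (Re v) * (u * w) = p"
    using p by (simp add: v u mult.assoc cww) (simp add: field_simps flip: of_real_mult, simp add: e2)
  have w2: "w^2 = of_real e * (p*q / of_real (cmod (p*q)))"
  proof -
    have "w^2 = \<eta>^2 * \<rho>0^2 * a" by (simp add: w power_mult_distrib r2)
    also have "\<dots> = of_real e * (p*q / of_real (cmod (p*q))) * (\<zeta>0 * cnj \<zeta>0)"
      by (simp add: he r0 a_def)
    finally show ?thesis using unit_sq[OF z0] by (simp add: mult.commute)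
  qed
  have "cnj u * w = of_real \<epsilon> * (cnj p / of_real (cmod p)) * w^2"
    by (simp add: u power2_eq_square)
  also have "\<dots> = of_real (\<epsilon> * e) * (cnj p * p) * q / (of_real (cmod p) * of_real (cmod p * cmod q))"
    by (simp add: w2 norm_mult)
  also have "\<dots> = of_real (\<epsilon> * e) * q / of_real (cmod q)"
    using p q by (simp add: cp power2_eq_square)
  finally show "of_real (Im v) * (cnj u * w) = q"
    using q by (simp add: v) (simp add: field_simps flip: of_real_mult, simp add: e2 mult.assoc[symmetric])
qed
lemma sec_inv:
  assumes z0: "cmod \<zeta>0 = 1" and r0: "\<rho>0^2 = \<zeta>0"
    and cu: "cmod u = 1" and cv: "cmod v = 1" and cw: "cmod w = 1" and reg: "Re v * Im v \<noteq> 0"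
    and eps: "\<epsilon> = 1 \<or> \<epsilon> = -1" and eta: "\<eta> \<in> {1,-1,\<i>,-\<i>}"
    and E: "\<epsilon> * Re v > 0" and S: "Re (w / (\<eta>*\<rho>0)) > \<bar>Im (w / (\<eta>*\<rho>0))\<bar>"
    and O: "Re (of_real (Re v) * (u*w) * (of_real (Im v) * (cnj u * w)) * cnj \<zeta>0) > 0"
  shows "sec \<zeta>0 \<rho>0 \<epsilon> \<eta> (of_real (Re v) * (u*w)) (of_real (Im v) * (cnj u * w)) = (u,v,w)"
proof -
  define p where "p = of_real (Re v) * (u*w)"
  define q where "q = of_real (Im v) * (cnj u * w)"
  define e where "e = Re (\<eta>^2)"
  have he: "\<eta>^2 = of_real e" "e = 1 \<or> e = -1" "cmod \<eta> = 1" using eta_facts[OF eta] by (auto simp: e_def)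
  have "cmod \<rho>0 ^ 2 = 1" using r0 z0 by (simp flip: norm_power)
  then have cr0: "cmod \<rho>0 = 1" by (simp add: power2_eq_1_iff) (use norm_ge_zero[of \<rho>0] in linarith)
  have nz: "\<eta> \<noteq> 0" "\<rho>0 \<noteq> 0" using he cr0 by auto
  define y where "y = w / (\<eta>*\<rho>0)"
  have wy: "w = \<eta> * \<rho>0 * y" using nz by (simp add: y_def)
  have cuu: "cnj u * u = 1" by (rule unit_sq[OF cu])
  have cz: "\<zeta>0 * cnj \<zeta>0 = 1" using unit_sq[OF z0] by (simp add: mult.commute)
  have cp: "cmod p = \<bar>Re v\<bar>" by (simp add: p_def norm_mult cu cw)
  have cq: "cmod q = \<bar>Im v\<bar>" by (simp add: q_def norm_mult cu cw)
  have pq: "p * q = of_real (Re v * Im v) * w^2"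
  proof -
    have "p * q = of_real (Re v * Im v) * (cnj u * u) * w^2"
      by (simp add: p_def q_def power2_eq_square algebra_simps)
    then show ?thesis by (simp add: cuu)
  qed
  define s where "s = (Re v * Im v) / \<bar>Re v * Im v\<bar>"
  have s1: "s = 1 \<or> s = -1" using reg by (auto simp: s_def abs_if)
  have w2: "w^2 * cnj \<zeta>0 = of_real e * y^2"
    by (simp add: wy power_mult_distrib he r0 algebra_simps cz)
  define a where "a = p*q / of_real (cmod (p*q)) * cnj \<zeta>0"
  have a: "a = of_real (s * e) * y^2"
  proof -
    have "cmod (p*q) = \<bar>Re v * Im v\<bar>" by (simp add: pq norm_mult norm_power cw abs_mult)
    then have "a = of_real s * (w^2 * cnj \<zeta>0)" by (simp add: a_def pq s_def)
    then show ?thesis by (simp add: w2)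
  qed
  have Sy: "Re y > \<bar>Im y\<bar>" using S by (simp add: y_def)
  have Ry2: "Re (y^2) > 0"
  proof -
    have "\<bar>Im y\<bar>^2 < Re y ^2" using Sy by (intro power_strict_mono) auto
    then show ?thesis by (simp add: power2_eq_square)
  qed
  have "Re a > 0"
  proof -
    have "Re (p * q * cnj \<zeta>0) > 0" using O by (simp add: p_def q_def)
    moreover have "cmod (p*q) > 0" using reg by (simp add: pq norm_mult norm_power cw)
    ultimately show ?thesis by (simp add: a_def)
  qed
  then have "s * e * Re (y^2) > 0" by (simp add: a)
  then have se: "s * e > 0" using Ry2 by (simp add: zero_less_mult_iff)
  then have se1: "s * e = 1" using s1 he by auto
  have ay: "a = y^2" using a se1 by simp
  have csq: "csqrt a = y" unfolding ay by (rule csqrt_square) (use Sy in linarith)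
  have w': "\<eta> * \<rho>0 * csqrt a = w" by (simp add: csq wy)
  have es: "e = s" using se1 s1 he by auto
  have v1: "\<epsilon> * cmod p = Re v" using E eps by (auto simp: cp abs_if)
  have v2: "\<epsilon> * e * cmod q = Im v"
    using E eps reg unfolding es s_def cq by (auto simp: abs_if field_simps mult_less_0_iff)
  have v': "of_real (\<epsilon> * cmod p) + \<i> * of_real (\<epsilon> * e * cmod q) = v"
    by (simp add: v1 v2 complex_eq_iff)
  have cww: "cnj w * w = 1" by (rule unit_sq[OF cw])
  have u': "of_real \<epsilon> * (p / of_real (cmod p)) * cnj w = u"
  proof -
    have "\<epsilon> * Re v / \<bar>Re v\<bar> = 1" using E eps by (auto simp: abs_if)
    then have "of_real \<epsilon> * (of_real (Re v) / of_real \<bar>Re v\<bar>) = (1::complex)"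
      by (metis of_real_1 of_real_divide of_real_mult times_divide_eq_right)
    moreover have "of_real \<epsilon> * (p / of_real (cmod p)) * cnj w = of_real \<epsilon> * (of_real (Re v) / of_real \<bar>Re v\<bar>) * (u * (cnj w * w))"
      by (simp only: cp) (simp add: p_def algebra_simps)
    ultimately show ?thesis by (simp add: cww)
  qed
  show ?thesis
    using w' v' u' unfolding p_def[symmetric] q_def[symmetric]
    by (simp add: sec_def Let_def a_def e_def)
qed



lemma vector_4 [simp]:
  "(vector[a,b,c,d] :: 'a::zero^4)$1 = a" "(vector[a,b,c,d] :: 'a::zero^4)$2 = b"
  "(vector[a,b,c,d] :: 'a::zero^4)$3 = c" "(vector[a,b,c,d] :: 'a::zero^4)$4 = d"
  unfolding vector_def by simp_all

definition phi :: "complex \<times> complex \<times> complex \<Rightarrow> A2" where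
  "phi = (\<lambda>(u,v,w). vector [Re v * Re (u*w), Re v * Im (u*w), Im v * Im (cnj u * w), Im v * Re (cnj u * w)])"

definition PP :: "A2 \<Rightarrow> complex" where "PP x = of_real (x$1) + \<i> * of_real (x$2)"
definition QQ :: "A2 \<Rightarrow> complex" where "QQ x = of_real (x$4) + \<i> * of_real (x$3)"

lemma PQ_phi: "PP (phi (u,v,w)) = of_real (Re v) * (u*w)" "QQ (phi (u,v,w)) = of_real (Im v) * (cnj u*w)"
  by (simp_all add: PP_def QQ_def phi_def complex_eq_iff)

lemma PQ_eq: "x = y \<longleftrightarrow> PP x = PP y \<and> QQ x = QQ y"
  by (auto simp: PP_def QQ_def complex_eq_iff vec_eq_iff forall_4)

lemma cont_PP: "continuous_on S PP" and cont_QQ: "continuous_on S QQ"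
  unfolding PP_def QQ_def by (intro continuous_intros)+

lemma target_iff: "x \<in> target \<longleftrightarrow> cmod (PP x)^2 + cmod (QQ x)^2 = 1 \<and> PP x \<noteq> 0 \<and> QQ x \<noteq> 0"
proof -
  have n: "norm x = 1 \<longleftrightarrow> cmod (PP x)^2 + cmod (QQ x)^2 = 1"
    by (simp add: norm_vec_def L2_set_def sum_4 cmod_power2 PP_def QQ_def algebra_simps)
  have a1: "x \<in> A1 \<longleftrightarrow> QQ x = 0"
  proof
    assume "x \<in> A1" then show "QQ x = 0" by (auto simp: A1_def QQ_def A2_one_def A2_e1_def)
  next
    assume "QQ x = 0"
    then have "x = (x$1) *\<^sub>R A2_one + (x$2) *\<^sub>R A2_e1"
      by (auto simp: QQ_def A2_one_def A2_e1_def vec_eq_iff forall_4 complex_eq_iff)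
    then show "x \<in> A1" unfolding A1_def by blast
  qed
  have a2: "x \<in> A1e2 \<longleftrightarrow> PP x = 0"
  proof
    assume "x \<in> A1e2" then show "PP x = 0"
      by (auto simp: A1e2_def A1_def PP_def A2_one_def A2_e1_def A2_e2_def A2_mult_def)
  next
    assume "PP x = 0"
    then have "x = A2_mult ((x$3) *\<^sub>R A2_one + (x$4) *\<^sub>R A2_e1) A2_e2"
      by (auto simp: PP_def A2_one_def A2_e1_def A2_e2_def A2_mult_def vec_eq_iff forall_4 complex_eq_iff)
    then show "x \<in> A1e2" unfolding A1e2_def A1_def by blast
  qed
  show ?thesis unfolding target_def using n a1 a2 by auto
qed

lemma torus_iff: "(u,v,w) \<in> torus_reg \<longleftrightarrow> cmod u = 1 \<and> cmod v = 1 \<and> cmod w = 1 \<and> Re v * Im v \<noteq> 0"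
proof -
  have "cmod v = 1 \<Longrightarrow> sin (2 * Arg v) = 2 * Re v * Im v"
  proof -
    assume "cmod v = 1"
    then have "v \<noteq> 0" by auto
    then have "cos (Arg v) = Re v" "sin (Arg v) = Im v" using cis_Arg[of v] \<open>cmod v = 1\<close> by (auto simp: sgn_div_norm complex_eq_iff)
    then show ?thesis by (simp add: sin_double)
  qed
  then show ?thesis by (auto simp: torus_reg_def circle_def)
qed

lemma phi_target: "z \<in> torus_reg \<Longrightarrow> phi z \<in> target"
proof -
  assume "z \<in> torus_reg"
  then obtain u v w where z: "z = (u,v,w)" and c: "cmod u = 1" "cmod v = 1" "cmod w = 1" "Re v * Im v \<noteq> 0"
    by (metis prod_cases3 torus_iff)
  have "Re v^2 + Im v^2 = 1" using c(2) cmod_power2[of v] by simp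
  moreover have "u \<noteq> 0" "w \<noteq> 0" using c by auto
  ultimately show ?thesis using c by (simp add: target_iff z PQ_phi norm_mult cmod_power2 power_mult_distrib)
qed

lemma vector4_lin: "(vector [a,b,c,d] :: A2) = a *\<^sub>R vector [1,0,0,0] + b *\<^sub>R vector [0,1,0,0] + c *\<^sub>R vector [0,0,1,0] + d *\<^sub>R vector [0,0,0,1]"
  by (simp add: vec_eq_iff forall_4)

lemma cont_phi: "continuous_on S phi"
proof -
  have eq: "phi = (\<lambda>z. (Re (fst (snd z)) * Re (fst z * snd (snd z))) *\<^sub>R vector [1,0,0,0] + (Re (fst (snd z)) * Im (fst z * snd (snd z))) *\<^sub>R vector [0,1,0,0]
     + (Im (fst (snd z)) * Im (cnj (fst z) * snd (snd z))) *\<^sub>R vector [0,0,1,0] + (Im (fst (snd z)) * Re (cnj (fst z) * snd (snd z))) *\<^sub>R vector [0,0,0,1])"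
    by (auto simp: phi_def fun_eq_iff vector4_lin[symmetric])
  show ?thesis unfolding eq by (intro continuous_intros)
qed



definition Oset :: "complex \<Rightarrow> A2 set" where "Oset \<zeta>0 = {x. Re (PP x * QQ x * cnj \<zeta>0) > 0}"
definition WW :: "complex \<Rightarrow> real \<Rightarrow> complex \<Rightarrow> (complex\<times>complex\<times>complex) set" where
  "WW \<rho>0 \<epsilon> \<eta> = {(u,v,w). \<epsilon> * Re v > 0 \<and> Re (w/(\<eta>*\<rho>0)) > \<bar>Im (w/(\<eta>*\<rho>0))\<bar>}"
definition VV where "VV \<zeta>0 \<rho>0 k = torus_reg \<inter> phi -` Oset \<zeta>0 \<inter> WW \<rho>0 (fst k) (snd k)"
definition sig where "sig \<zeta>0 \<rho>0 k x = sec \<zeta>0 \<rho>0 (fst k) (snd k) (PP x) (QQ x)"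
definition II :: "(real \<times> complex) set" where "II = {1,-1} \<times> {1,-1,\<i>,-\<i>}"

lemma sector_simps:
  "Re (y/1) > \<bar>Im (y/1)\<bar> \<longleftrightarrow> Re y > \<bar>Im y\<bar>"
  "Re (y/(-1)) > \<bar>Im (y/(-1))\<bar> \<longleftrightarrow> - Re y > \<bar>Im y\<bar>"
  "Re (y/\<i>) > \<bar>Im (y/\<i>)\<bar> \<longleftrightarrow> Im y > \<bar>Re y\<bar>"
  "Re (y/(-\<i>)) > \<bar>Im (y/(-\<i>))\<bar> \<longleftrightarrow> - Im y > \<bar>Re y\<bar>"
  by (simp_all add: divide_i)

lemma sector_unique:
  assumes "\<eta> \<in> {1,-1,\<i>,-\<i>}" "\<eta>' \<in> {1,-1,\<i>,-\<i>}"
    "Re (y/\<eta>) > \<bar>Im (y/\<eta>)\<bar>" "Re (y/\<eta>') > \<bar>Im (y/\<eta>')\<bar>"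
  shows "\<eta> = \<eta>'"
  using assms by (elim insertE emptyE; hypsubst; simp only: sector_simps; linarith)

lemma WW_alt: "\<rho>0 \<noteq> 0 \<Longrightarrow> (u,v,w) \<in> WW \<rho>0 \<epsilon> \<eta> \<longleftrightarrow> \<epsilon> * Re v > 0 \<and> Re ((w/\<rho>0)/\<eta>) > \<bar>Im ((w/\<rho>0)/\<eta>)\<bar>"
  by (simp add: WW_def mult.commute)

lemma open_Oset: "open (Oset \<zeta>0)"
  unfolding Oset_def by (intro open_Collect_less continuous_intros cont_PP cont_QQ)

lemma open_WW: "open (WW \<rho>0 \<epsilon> \<eta>)"
proof -
  define c where "c = inverse (\<eta>*\<rho>0)"
  have "WW \<rho>0 \<epsilon> \<eta> = {z. 0 < \<epsilon> * Re (fst (snd z))} \<inter> {z. \<bar>Im (snd (snd z) * c)\<bar> < Re (snd (snd z) * c)}"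
    by (auto simp: WW_def c_def divide_inverse)
  also have "open \<dots>" by (intro open_Int open_Collect_less continuous_intros)
  finally show ?thesis .
qed

context
  fixes \<zeta>0 \<rho>0 :: complex
  assumes z0: "cmod \<zeta>0 = 1" and r0: "\<rho>0^2 = \<zeta>0"
begin

lemma r0nz: "\<rho>0 \<noteq> 0" using z0 r0 by auto

lemma sig_ok:
  assumes k: "k \<in> II" and x: "x \<in> target" and xO: "x \<in> Oset \<zeta>0"
  shows "sig \<zeta>0 \<rho>0 k x \<in> VV \<zeta>0 \<rho>0 k" "phi (sig \<zeta>0 \<rho>0 k x) = x"
proof -
  obtain \<epsilon> \<eta> where k': "k = (\<epsilon>,\<eta>)" by force
  obtain u v w where s: "sec \<zeta>0 \<rho>0 \<epsilon> \<eta> (PP x) (QQ x) = (u,v,w)" by (metis prod_cases3)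
  have eps: "\<epsilon> = 1 \<or> \<epsilon> = -1" and eta: "\<eta> \<in> {1,-1,\<i>,-\<i>}" using k by (auto simp: II_def k')
  note t = x[unfolded target_iff]
  note so = sec_ok[OF z0 r0 _ _ _ _ eps eta s] t xO[unfolded Oset_def]
  have ph: "phi (u,v,w) = x" using so by (simp add: PQ_eq PQ_phi)
  show "phi (sig \<zeta>0 \<rho>0 k x) = x" using ph s by (simp add: sig_def k')
  show "sig \<zeta>0 \<rho>0 k x \<in> VV \<zeta>0 \<rho>0 k"
    using so ph xO by (simp add: sig_def k' s VV_def torus_iff WW_def)
qed

lemma sig_inv:
  assumes k: "k \<in> II" and z: "z \<in> VV \<zeta>0 \<rho>0 k"
  shows "sig \<zeta>0 \<rho>0 k (phi z) = z"
proof -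
  obtain \<epsilon> \<eta> where k': "k = (\<epsilon>,\<eta>)" by force
  obtain u v w where zz: "z = (u,v,w)" by (metis prod_cases3)
  have eps: "\<epsilon> = 1 \<or> \<epsilon> = -1" and eta: "\<eta> \<in> {1,-1,\<i>,-\<i>}" using k by (auto simp: II_def k')
  have c: "cmod u = 1" "cmod v = 1" "cmod w = 1" "Re v * Im v \<noteq> 0" "\<epsilon> * Re v > 0"
     "Re (w/(\<eta>*\<rho>0)) > \<bar>Im (w/(\<eta>*\<rho>0))\<bar>" "phi (u,v,w) \<in> Oset \<zeta>0"
    using z by (auto simp: VV_def zz k' torus_iff WW_def)
  show ?thesis
    using sec_inv[OF z0 r0 c(1-4) eps eta c(5,6)] c(7)
    by (simp add: sig_def zz k' PQ_phi Oset_def)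
qed

lemma VV_cover:
  assumes z: "z \<in> torus_reg" "phi z \<in> Oset \<zeta>0"
  shows "\<exists>k\<in>II. z \<in> VV \<zeta>0 \<rho>0 k"
proof -
  obtain u v w where zz: "z = (u,v,w)" by (metis prod_cases3)
  have c: "cmod u = 1" "cmod v = 1" "cmod w = 1" "Re v * Im v \<noteq> 0"
    using z by (auto simp: zz torus_iff)
  have O: "Re (of_real (Re v) * (u*w) * (of_real (Im v) * (cnj u * w)) * cnj \<zeta>0) > 0"
    using z by (simp add: zz Oset_def PQ_phi)
  have cuu: "cnj u * u = 1" by (rule unit_sq[OF c(1)])
  have "of_real (Re v) * (u*w) * (of_real (Im v) * (cnj u * w)) * cnj \<zeta>0 = of_real (Re v * Im v) * (cnj u * u) * (w^2 * cnj \<zeta>0)"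
    by (simp add: power2_eq_square algebra_simps)
  also have "\<dots> = of_real (Re v * Im v) * (w^2 * cnj \<zeta>0)" by (simp add: cuu)
  finally have eq: "of_real (Re v) * (u*w) * (of_real (Im v) * (cnj u * w)) * cnj \<zeta>0 = of_real (Re v * Im v) * (w^2 * cnj \<zeta>0)" .
  have "Re (of_real (Re v * Im v) * (w^2 * cnj \<zeta>0)) > 0" using O unfolding eq .
  moreover have "Re (of_real (Re v * Im v) * (w^2 * cnj \<zeta>0)) = (Re v * Im v) * Re (w^2 * cnj \<zeta>0)"
    by simp
  ultimately have R: "Re (w^2 * cnj \<zeta>0) \<noteq> 0" by auto
  define y where "y = w / \<rho>0"
  have cz: "cnj \<zeta>0 * \<zeta>0 = 1" by (rule unit_sq[OF z0])
  have "y^2 = w^2 * cnj \<zeta>0"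
  proof -
    have "y^2 = w^2 / \<zeta>0" by (simp add: y_def power_divide r0)
    also have "\<dots> = w^2 * cnj \<zeta>0"
    proof -
      have nz: "\<zeta>0 \<noteq> 0" using z0 by auto
      have "w^2 * cnj \<zeta>0 * \<zeta>0 = w^2" using cz by (simp add: mult.assoc)
      then show ?thesis by (metis nz nonzero_mult_div_cancel_right)
    qed
    finally show ?thesis .
  qed
  then have "Re (y^2) \<noteq> 0" using R by simp
  then have ne: "(Re y)^2 \<noteq> (Im y)^2" by (simp add: power2_eq_square)
  have "\<exists>\<eta>\<in>{1,-1,\<i>,-\<i>}. Re (y/\<eta>) > \<bar>Im (y/\<eta>)\<bar>"
  proof -
    consider "Re y > \<bar>Im y\<bar>" | "- Re y > \<bar>Im y\<bar>" | "Im y > \<bar>Re y\<bar>" | "- Im y > \<bar>Re y\<bar>"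
    proof (cases "\<bar>Im y\<bar> < \<bar>Re y\<bar>")
      case True
      then show ?thesis using that by (cases "Re y > 0") auto
    next
      case False
      then have "\<bar>Re y\<bar> < \<bar>Im y\<bar>" using ne by (metis power2_abs linorder_neqE_linordered_idom not_less)
      then show ?thesis using that by (cases "Im y > 0") auto
    qed
    then show ?thesis
    proof cases
      case 1 then show ?thesis by (intro bexI[of _ 1]) (simp_all only: sector_simps, simp)
    next
      case 2 then show ?thesis by (intro bexI[of _ "-1"]) (simp_all only: sector_simps, simp)
    next
      case 3 then show ?thesis by (intro bexI[of _ "\<i>"]) (simp_all only: sector_simps, simp)
    next
      case 4 then show ?thesis by (intro bexI[of _ "-\<i>"]) (simp_all only: sector_simps, simp)
    qed
  qed
  then obtain \<eta> where eta: "\<eta> \<in> {1,-1,\<i>,-\<i>}" and S: "Re (y/\<eta>) > \<bar>Im (y/\<eta>)\<bar>" by blast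
  define \<epsilon> where "\<epsilon> = (if Re v > 0 then 1 else -1::real)"
  have "\<epsilon> * Re v > 0" using c(4) by (auto simp: \<epsilon>_def)
  then have "z \<in> VV \<zeta>0 \<rho>0 (\<epsilon>,\<eta>)" using z S r0nz by (simp add: VV_def zz WW_alt y_def)
  moreover have "(\<epsilon>,\<eta>) \<in> II" using eta by (simp add: II_def \<epsilon>_def)
  ultimately show ?thesis by blast
qed

lemma VV_disj:
  assumes k: "k \<in> II" "k' \<in> II" "k \<noteq> k'"
  shows "VV \<zeta>0 \<rho>0 k \<inter> VV \<zeta>0 \<rho>0 k' = {}"
proof (rule ccontr)
  assume "VV \<zeta>0 \<rho>0 k \<inter> VV \<zeta>0 \<rho>0 k' \<noteq> {}"
  then obtain u v w where "(u,v,w) \<in> WW \<rho>0 (fst k) (snd k)" "(u,v,w) \<in> WW \<rho>0 (fst k') (snd k')"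
    by (auto simp: VV_def)
  then have A: "fst k * Re v > 0" "fst k' * Re v > 0"
    "Re ((w/\<rho>0)/snd k) > \<bar>Im ((w/\<rho>0)/snd k)\<bar>" "Re ((w/\<rho>0)/snd k') > \<bar>Im ((w/\<rho>0)/snd k')\<bar>"
    using r0nz by (auto simp: WW_alt)
  have "fst k = fst k'" using A(1,2) k(1,2) by (auto simp: II_def zero_less_mult_iff)
  moreover have "snd k = snd k'"
    using A(3,4) k(1,2) unfolding II_def by (intro sector_unique[of "snd k" "snd k'" "w/\<rho>0"]) auto
  ultimately show False using k(3) by (simp add: prod_eq_iff)
qed

lemma sig_cont:
  assumes k: "k \<in> II"
  shows "continuous_on (target \<inter> Oset \<zeta>0) (sig \<zeta>0 \<rho>0 k)"
proof -
  obtain \<epsilon> \<eta> where k': "k = (\<epsilon>,\<eta>)" by force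
  let ?S = "target \<inter> Oset \<zeta>0"
  let ?f = "\<lambda>x. PP x * QQ x / of_real (cmod (PP x * QQ x)) * cnj \<zeta>0"
  have nz: "\<And>x. x \<in> ?S \<Longrightarrow> PP x \<noteq> 0 \<and> QQ x \<noteq> 0" by (auto simp: target_iff)
  have cP: "continuous_on ?S PP" and cQ: "continuous_on ?S QQ" by (rule cont_PP, rule cont_QQ)
  have c1: "continuous_on ?S (\<lambda>x. PP x * QQ x)" by (rule continuous_on_mult[OF cP cQ])
  have c2: "continuous_on ?S (\<lambda>x. of_real (cmod (PP x * QQ x)) :: complex)"
    by (rule continuous_on_of_real[OF continuous_on_norm[OF c1]])
  have nz2: "\<forall>x\<in>?S. (of_real (cmod (PP x * QQ x)) :: complex) \<noteq> 0" using nz by auto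
  have cf: "continuous_on ?S ?f"
    by (rule continuous_on_mult[OF continuous_on_divide[OF c1 c2 nz2] continuous_on_const])
  have fS: "?f ` ?S \<subseteq> - \<real>\<^sub>\<le>\<^sub>0"
  proof
    fix y assume "y \<in> ?f ` ?S"
    then obtain x where x: "x \<in> ?S" and y: "y = ?f x" by blast
    have "Re y > 0" using x nz[OF x] by (simp add: y Oset_def norm_mult mult.assoc)
    then show "y \<in> - \<real>\<^sub>\<le>\<^sub>0" by (auto simp: complex_nonpos_Reals_iff)
  qed
  have cs: "continuous_on ?S (\<lambda>x. csqrt (?f x))"
    by (rule continuous_on_compose2[OF continuous_on_csqrt cf fS])
  have cw: "continuous_on ?S (\<lambda>x. \<eta> * \<rho>0 * csqrt (?f x))"
    by (rule continuous_on_mult[OF continuous_on_const cs])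
  have c3: "continuous_on ?S (\<lambda>x. of_real (cmod (PP x)) :: complex)"
    by (rule continuous_on_of_real[OF continuous_on_norm[OF cP]])
  have nz3: "\<forall>x\<in>?S. (of_real (cmod (PP x)) :: complex) \<noteq> 0" using nz by auto
  have cu: "continuous_on ?S (\<lambda>x. of_real \<epsilon> * (PP x / of_real (cmod (PP x))) * cnj (\<eta> * \<rho>0 * csqrt (?f x)))"
    by (rule continuous_on_mult[OF continuous_on_mult[OF continuous_on_const continuous_on_divide[OF cP c3 nz3]] continuous_on_cnj[OF cw]])
  have cv: "continuous_on ?S (\<lambda>x. of_real (\<epsilon> * cmod (PP x)) + \<i> * of_real (\<epsilon> * Re (\<eta>^2) * cmod (QQ x)))"
    by (intro continuous_on_add continuous_on_mult continuous_on_const continuous_on_of_real continuous_on_norm cP cQ)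
  have "continuous_on ?S (\<lambda>x. (of_real \<epsilon> * (PP x / of_real (cmod (PP x))) * cnj (\<eta> * \<rho>0 * csqrt (?f x)),
        of_real (\<epsilon> * cmod (PP x)) + \<i> * of_real (\<epsilon> * Re (\<eta>^2) * cmod (QQ x)), \<eta> * \<rho>0 * csqrt (?f x)))"
    by (rule continuous_on_Pair[OF cu continuous_on_Pair[OF cv cw]])
  then show ?thesis by (simp add: sig_def[abs_def] sec_def Let_def k')
qed

end



lemma covering_space_cong:
  assumes cov: "covering_space c p S" and eq: "\<And>x. x \<in> c \<Longrightarrow> p' x = p x"
  shows "covering_space c p' S"
proof (rule covering_spaceI)
  have "continuous_on c p' = continuous_on c p" by (rule continuous_on_cong) (auto simp: eq)
  then show "continuous_on c p'" using covering_space_imp_continuous[OF cov] by simp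
  show "p' ` c = S" using covering_space_imp_surjective[OF cov] eq by (simp cong: image_cong)
  fix x assume x: "x \<in> S"
  have all: "\<forall>x\<in>S. \<exists>T. x \<in> T \<and> openin (top_of_set S) T \<and>
          (\<exists>v. \<Union>v = c \<inter> p -` T \<and> (\<forall>u \<in> v. openin (top_of_set c) u) \<and>
               pairwise disjnt v \<and> (\<forall>u \<in> v. \<exists>q. homeomorphism u T p q))"
    using cov unfolding covering_space_def by (elim conjE)
  obtain T v where T: "x \<in> T" "openin (top_of_set S) T" and v: "\<Union>v = c \<inter> p -` T"
     "\<forall>u \<in> v. openin (top_of_set c) u" "pairwise disjnt v" "\<forall>u \<in> v. \<exists>q. homeomorphism u T p q"
    using bspec[OF all x] by (elim exE conjE) (rule that; assumption)
  have v': "\<Union>v = c \<inter> p' -` T" using v(1) eq by auto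
  have h: "\<forall>u \<in> v. \<exists>q. homeomorphism u T p' q"
  proof
    fix u assume u: "u \<in> v"
    then obtain q where hq: "homeomorphism u T p q" using v(4) by blast
    have uc: "u \<subseteq> c" using u v(1) by auto
    have "homeomorphism u T p' q"
      by (rule homeomorphism_cong[OF hq refl refl]) (use uc eq in auto)
    then show "\<exists>q. homeomorphism u T p' q" by blast
  qed
  show "\<exists>T. x \<in> T \<and> openin (top_of_set S) T \<and>
          (\<exists>v. \<Union>v = c \<inter> p' -` T \<and> (\<forall>u \<in> v. openin (top_of_set c) u) \<and>
               pairwise disjnt v \<and> (\<forall>u \<in> v. \<exists>q. homeomorphism u T p' q))"
    by (intro exI[of _ T] conjI T exI[of _ v] v' v(2,3) h)
qed

definition zz where "zz x0 = sgn (PP x0 * QQ x0)"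

lemma zz_props:
  assumes x0: "x0 \<in> target"
  shows "cmod (zz x0) = 1" "(csqrt (zz x0))^2 = zz x0" "x0 \<in> Oset (zz x0)"
proof -
  have nz: "PP x0 * QQ x0 \<noteq> 0" using x0 by (simp add: target_iff)
  show "cmod (zz x0) = 1" using nz by (simp add: zz_def norm_sgn)
  show "(csqrt (zz x0))^2 = zz x0" by simp
  have "PP x0 * QQ x0 * cnj (zz x0) = of_real (cmod (PP x0 * QQ x0))"
  proof -
    have "PP x0 * QQ x0 * cnj (zz x0) = (PP x0 * QQ x0 * cnj (PP x0 * QQ x0)) / of_real (cmod (PP x0 * QQ x0))"
      by (simp add: zz_def sgn_eq)
    also have "\<dots> = of_real (cmod (PP x0 * QQ x0) ^ 2) / of_real (cmod (PP x0 * QQ x0))"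
      by (simp only: complex_norm_square)
    also have "\<dots> = of_real (cmod (PP x0 * QQ x0))" using nz by (simp add: power2_eq_square)
    finally show ?thesis .
  qed
  then show "x0 \<in> Oset (zz x0)" unfolding Oset_def mem_Collect_eq using nz by simp
qed

lemma card_II: "card II = 8"
proof -
  have "card ({1,-1,\<i>,-\<i>} :: complex set) = 4" by (simp add: complex_eq_iff)
  moreover have "card ({1,-1} :: real set) = 2" by simp
  ultimately show ?thesis unfolding II_def card_cartesian_product by simp
qed

lemma phi_cov: "covering_space torus_reg phi target"
proof (rule covering_spaceI)
  show "continuous_on torus_reg phi" by (rule cont_phi)
  show "phi ` torus_reg = target"
  proof
    show "phi ` torus_reg \<subseteq> target" using phi_target by auto
    show "target \<subseteq> phi ` torus_reg"
    proof
      fix x assume x: "x \<in> target"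
      note zp = zz_props[OF x]
      have k: "(1, 1) \<in> II" by (simp add: II_def)
      note s = sig_ok[OF zp(1,2) k x zp(3)]
      then show "x \<in> phi ` torus_reg" by (metis IntD1 VV_def image_eqI)
    qed
  qed
  fix x0 assume x0: "x0 \<in> target"
  note zp = zz_props[OF x0]
  define \<zeta>0 where "\<zeta>0 = zz x0"
  define \<rho>0 where "\<rho>0 = csqrt \<zeta>0"
  have z0: "cmod \<zeta>0 = 1" and r0: "\<rho>0^2 = \<zeta>0" and xO: "x0 \<in> Oset \<zeta>0" using zp by (simp_all add: \<zeta>0_def \<rho>0_def)
  define T where "T = target \<inter> Oset \<zeta>0"
  have oT: "openin (top_of_set target) T" unfolding T_def by (rule openin_open_Int[OF open_Oset])
  define v where "v = VV \<zeta>0 \<rho>0 ` II"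
  have U: "\<Union>v = torus_reg \<inter> phi -` T"
  proof
    show "\<Union>v \<subseteq> torus_reg \<inter> phi -` T" using phi_target by (auto simp: v_def VV_def T_def)
    show "torus_reg \<inter> phi -` T \<subseteq> \<Union>v" using VV_cover[OF z0 r0] by (auto simp: v_def T_def)
  qed
  have op: "\<forall>u \<in> v. openin (top_of_set torus_reg) u"
  proof
    fix u assume "u \<in> v"
    then obtain k where u: "u = VV \<zeta>0 \<rho>0 k" using v_def by blast
    show "openin (top_of_set torus_reg) u"
      unfolding u VV_def
      by (rule openin_Int_open[OF continuous_openin_preimage_gen[OF cont_phi open_Oset] open_WW])
  qed
  have pd: "pairwise disjnt v"
    unfolding v_def pairwise_def disjnt_def
  proof (intro ballI impI)
    fix A B assume "A \<in> VV \<zeta>0 \<rho>0 ` II" "B \<in> VV \<zeta>0 \<rho>0 ` II" "A \<noteq> B"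
    then obtain k k' where "k \<in> II" "k' \<in> II" "A = VV \<zeta>0 \<rho>0 k" "B = VV \<zeta>0 \<rho>0 k'" "k \<noteq> k'" by blast
    then show "A \<inter> B = {}" using VV_disj[OF z0 r0] by blast
  qed
  have hom: "\<forall>u \<in> v. \<exists>q. homeomorphism u T phi q"
  proof
    fix u assume "u \<in> v"
    then obtain k where k: "k \<in> II" and u: "u = VV \<zeta>0 \<rho>0 k" using v_def by blast
    have "homeomorphism u T phi (sig \<zeta>0 \<rho>0 k)"
      unfolding homeomorphism_def
    proof (intro conjI)
      show "\<forall>z\<in>u. sig \<zeta>0 \<rho>0 k (phi z) = z" using sig_inv[OF z0 r0 k] u by blast
      show "\<forall>x\<in>T. phi (sig \<zeta>0 \<rho>0 k x) = x" using sig_ok[OF z0 r0 k] T_def by blast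
      show "continuous_on u phi" by (rule cont_phi)
      show "continuous_on T (sig \<zeta>0 \<rho>0 k)" unfolding T_def by (rule sig_cont[OF z0 r0 k])
      show "phi ` u = T"
      proof
        show "phi ` u \<subseteq> T" using phi_target by (auto simp: u VV_def T_def)
        show "T \<subseteq> phi ` u"
        proof
          fix x assume "x \<in> T"
          then have x: "x \<in> target" "x \<in> Oset \<zeta>0" by (auto simp: T_def)
          show "x \<in> phi ` u" using sig_ok[OF z0 r0 k x] u by (metis image_eqI)
        qed
      qed
      show "sig \<zeta>0 \<rho>0 k ` T = u"
      proof
        show "sig \<zeta>0 \<rho>0 k ` T \<subseteq> u" using sig_ok[OF z0 r0 k] u T_def by blast
        show "u \<subseteq> sig \<zeta>0 \<rho>0 k ` T"
        proof
          fix z assume z: "z \<in> u"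
          then have "phi z \<in> T" using phi_target by (auto simp: u VV_def T_def)
          moreover have "sig \<zeta>0 \<rho>0 k (phi z) = z" using sig_inv[OF z0 r0 k] z u by blast
          ultimately show "z \<in> sig \<zeta>0 \<rho>0 k ` T" by (metis image_eqI)
        qed
      qed
    qed
    then show "\<exists>q. homeomorphism u T phi q" by blast
  qed
  show "\<exists>T. x0 \<in> T \<and> openin (top_of_set target) T \<and>
          (\<exists>v. \<Union>v = torus_reg \<inter> phi -` T \<and> (\<forall>u \<in> v. openin (top_of_set torus_reg) u) \<and>
               pairwise disjnt v \<and> (\<forall>u \<in> v. \<exists>q. homeomorphism u T phi q))"
  proof (intro exI conjI)
    show "x0 \<in> T" using x0 xO by (simp add: T_def)
  qed (rule oT, rule U, use op pd hom in auto)
qed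

lemma phi_card:
  assumes a: "a \<in> target"
  shows "card (torus_reg \<inter> phi -` {a}) = 8"
proof -
  note zp = zz_props[OF a]
  define \<zeta>0 where "\<zeta>0 = zz a"
  define \<rho>0 where "\<rho>0 = csqrt \<zeta>0"
  have z0: "cmod \<zeta>0 = 1" and r0: "\<rho>0^2 = \<zeta>0" and xO: "a \<in> Oset \<zeta>0" using zp by (simp_all add: \<zeta>0_def \<rho>0_def)
  have eq: "torus_reg \<inter> phi -` {a} = (\<lambda>k. sig \<zeta>0 \<rho>0 k a) ` II"
  proof
    show "torus_reg \<inter> phi -` {a} \<subseteq> (\<lambda>k. sig \<zeta>0 \<rho>0 k a) ` II"
    proof
      fix z assume z: "z \<in> torus_reg \<inter> phi -` {a}"
      then obtain k where k: "k \<in> II" "z \<in> VV \<zeta>0 \<rho>0 k" using VV_cover[OF z0 r0, of z] xO by auto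
      then have "sig \<zeta>0 \<rho>0 k a = z" using sig_inv[OF z0 r0 k(1) k(2)] z by auto
      then show "z \<in> (\<lambda>k. sig \<zeta>0 \<rho>0 k a) ` II" using k(1) by blast
    qed
    show "(\<lambda>k. sig \<zeta>0 \<rho>0 k a) ` II \<subseteq> torus_reg \<inter> phi -` {a}"
      using sig_ok[OF z0 r0 _ a xO] by (auto simp: VV_def)
  qed
  have "inj_on (\<lambda>k. sig \<zeta>0 \<rho>0 k a) II"
  proof (rule inj_onI, rule ccontr)
    fix k k' assume k: "k \<in> II" "k' \<in> II" "sig \<zeta>0 \<rho>0 k a = sig \<zeta>0 \<rho>0 k' a" "k \<noteq> k'"
    have "sig \<zeta>0 \<rho>0 k a \<in> VV \<zeta>0 \<rho>0 k \<inter> VV \<zeta>0 \<rho>0 k'"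
      using sig_ok(1)[OF z0 r0 k(1) a xO] sig_ok(1)[OF z0 r0 k(2) a xO] k(3) by auto
    then show False using VV_disj[OF z0 r0 k(1,2,4)] by blast
  qed
  then show ?thesis using eq card_II by (simp add: card_image)
qed

definition L1 :: "complex \<Rightarrow> A2" where "L1 z = vector [Re z, Im z, 0, 0]"
definition L2 :: "complex \<Rightarrow> A2" where "L2 z = vector [Re z, 0, 0, Im z]"

lemma bl_L1: "bounded_linear L1"
proof -
  have "L1 = (\<lambda>z. Re z *\<^sub>R A2_one + Im z *\<^sub>R A2_e1)"
    by (auto simp: L1_def A2_one_def A2_e1_def vec_eq_iff forall_4 fun_eq_iff)
  moreover have "bounded_linear (\<lambda>z. Re z *\<^sub>R A2_one + Im z *\<^sub>R A2_e1)"
    by (intro bounded_linear_add bounded_linear_compose[OF bounded_linear_scaleR_left] bounded_linear_Re bounded_linear_Im)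
  ultimately show ?thesis by simp
qed
lemma bl_L2: "bounded_linear L2"
proof -
  have "L2 = (\<lambda>z. Re z *\<^sub>R A2_one + Im z *\<^sub>R A2_e12)"
    by (auto simp: L2_def A2_one_def A2_e12_def vec_eq_iff forall_4 fun_eq_iff)
  moreover have "bounded_linear (\<lambda>z. Re z *\<^sub>R A2_one + Im z *\<^sub>R A2_e12)"
    by (intro bounded_linear_add bounded_linear_compose[OF bounded_linear_scaleR_left] bounded_linear_Re bounded_linear_Im)
  ultimately show ?thesis by simp
qed

lemma pow_e1: "A2_pow (t *\<^sub>R A2_e1) m = L1 ((\<i> * of_real t)^m)"
  by (induction m) (auto simp: L1_def A2_one_def A2_e1_def A2_mult_def vec_eq_iff forall_4)
lemma pow_e12: "A2_pow (t *\<^sub>R A2_e12) m = L2 ((\<i> * of_real t)^m)"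
  by (induction m) (auto simp: L2_def A2_one_def A2_e12_def A2_mult_def vec_eq_iff forall_4)

lemma exp_gen:
  assumes bl: "bounded_linear L" and pw: "\<And>m. A2_pow x m = L ((\<i> * of_real t)^m)"
  shows "A2_exp x = L (exp (\<i> * of_real t))"
proof -
  have "(\<lambda>m. L ((\<i> * of_real t)^m /\<^sub>R fact m)) sums L (exp (\<i> * of_real t))"
    by (rule bounded_linear.sums[OF bl exp_converges])
  moreover have "(\<lambda>m. L ((\<i> * of_real t)^m /\<^sub>R fact m)) = (\<lambda>m. (1 / fact m) *\<^sub>R A2_pow x m)"
    by (simp add: pw linear.scaleR[OF bounded_linear.linear[OF bl]] divide_inverse_commute)
  ultimately show ?thesis unfolding A2_exp_def by (simp add: sums_iff)
qed

lemma exp_e1: "A2_exp (t *\<^sub>R A2_e1) = vector [cos t, sin t, 0, 0]"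
  using exp_gen[OF bl_L1 pow_e1] by (simp add: L1_def exp_Euler cos_of_real sin_of_real mult.commute)
lemma exp_e12: "A2_exp (t *\<^sub>R A2_e12) = vector [cos t, 0, 0, sin t]"
  using exp_gen[OF bl_L2 pow_e12] by (simp add: L2_def exp_Euler cos_of_real sin_of_real mult.commute)

lemma cos_Arg_circ: "cmod z = 1 \<Longrightarrow> cos (Arg z) = Re z" and sin_Arg_circ: "cmod z = 1 \<Longrightarrow> sin (Arg z) = Im z"
proof -
  assume "cmod z = 1"
  then have "z \<noteq> 0" by auto
  then show "cos (Arg z) = Re z" "sin (Arg z) = Im z" using cis_Arg[of z] \<open>cmod z = 1\<close> by (auto simp: sgn_div_norm complex_eq_iff)
qed

lemma Phi_phi: "cmod u = 1 \<Longrightarrow> cmod v = 1 \<Longrightarrow> cmod w = 1 \<Longrightarrow> Phi (u,v,w) = phi (u,v,w)"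
  by (simp add: Phi_def phi_def exp_e1 exp_e12 cos_Arg_circ sin_Arg_circ A2_mult_def vec_eq_iff forall_4 algebra_simps)

lemma Phi_eq: "z \<in> torus_reg \<Longrightarrow> Phi z = phi z"
  by (cases z) (auto simp: torus_iff Phi_phi)

theorem proposition4p6:
  shows "covering_space torus_reg Phi target \<and>
         (\<forall>a \<in> target. card (torus_reg \<inter> Phi -` {a}) = 8)"
proof
  show "covering_space torus_reg Phi target" by (rule covering_space_cong[OF phi_cov Phi_eq])
  show "\<forall>a \<in> target. card (torus_reg \<inter> Phi -` {a}) = 8"
  proof
    fix a assume a: "a \<in> target"
    have "torus_reg \<inter> Phi -` {a} = torus_reg \<inter> phi -` {a}" using Phi_eq by auto
    then show "card (torus_reg \<inter> Phi -` {a}) = 8" using phi_card[OF a] by simp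
  qed
qed

end
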